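(* Let $0<p<1$ and let $\{a_n\}_{n\geq 0}$ be a sequence of non-negative real numbers such that $\{a^p_n\}_{n\geq 0}$ converges to a finite limit $a\in\mathbb{R}$. Then $\left\{\frac{1}{n+1}a^z_n(p)\right\}_{n\geq 0}$ converges to $0$, where $$a^z_n(p)=\sum_{i=\lfloor pn+\epsilon(n)\rfloor}^{n}w_n^i(p)\, a_i.$$
   Context: $a^p_n=\sum_{i=0}^n\binom{n}{i}p^i(1-p)^{n-i}a_i$. For $0<p<1$, $n\in\mathbb{N}$ and $0\le i\le n$, $w_n^i(p)=\sum_{j=i}^n\binom{j}{i}p^i(1-p)^{j-i}$. $\epsilon(n)=\sqrt{n}\log n$ for $n\geq2$ and $\epsilon(n)=1$ otherwise; a sum whose lower index exceeds its upper index is $0$. *)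

theory Defs
  imports Complex_Main
begin

definition binom_trans :: "real \<Rightarrow> (nat \<Rightarrow> real) \<Rightarrow> nat \<Rightarrow> real" where
  "binom_trans p a n = (\<Sum>i=0..n. real (n choose i) * p ^ i * (1 - p) ^ (n - i) * a i)"

definition wnp :: "nat \<Rightarrow> nat \<Rightarrow> real \<Rightarrow> real" where
  "wnp n i p = (\<Sum>j=i..n. real (j choose i) * p ^ i * (1 - p) ^ (j - i))"

definition eps :: "nat \<Rightarrow> real" where
  "eps n = (if n \<ge> 2 then sqrt (real n) * ln (real n) else 1)"

definition az :: "real \<Rightarrow> (nat \<Rightarrow> real) \<Rightarrow> nat \<Rightarrow> real" where
  "az p a n = (\<Sum>i = nat \<lfloor>p * real n + eps n\<rfloor> .. n. wnp n i p * a i)"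

end

theory Submission
  imports Defs "HOL-Probability.Hoeffding" "HOL-Real_Asymp.Real_Asymp"
begin

lemma wnp_neg:
  assumes p: "0 < p" "p < 1" and iN: "i \<le> N"
  shows "p * wnp N i p = measure_pmf.prob (neg_binomial_pmf (Suc i) p) {..N-i}"
proof -
  have "measure_pmf.prob (neg_binomial_pmf (Suc i) p) {..N-i}
      = (\<Sum>k\<le>N-i. pmf (neg_binomial_pmf (Suc i) p) k)"
    by (rule measure_measure_pmf_finite) simp
  also have "\<dots> = (\<Sum>k\<le>N-i. p * (real ((k+i) choose i) * p^i * (1-p)^k))"
  proof (intro sum.cong refl)
    fix k assume "k \<in> {..N-i}"
    have "(k + i) choose k = (k+i) choose i"
      using binomial_symmetric[of k "k+i"] by simp
    then show "pmf (neg_binomial_pmf (Suc i) p) k = p * (real ((k+i) choose i) * p^i * (1-p)^k)"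
      using p by (simp add: pmf_neg_binomial)
  qed
  also have "\<dots> = p * (\<Sum>k\<le>N-i. real ((k+i) choose i) * p^i * (1-p)^k)"
    by (simp add: sum_distrib_left)
  also have "(\<Sum>k\<le>N-i. real ((k+i) choose i) * p^i * (1-p)^k) = wnp N i p"
  proof -
    have "wnp N i p = (\<Sum>j=0+i..(N-i)+i. real (j choose i) * p ^ i * (1 - p) ^ (j - i))"
      using iN by (simp add: wnp_def)
    also have "\<dots> = (\<Sum>k=0..N-i. real ((k+i) choose i) * p ^ i * (1 - p) ^ (k + i - i))"
      by (rule sum.shift_bounds_cl_nat_ivl)
    finally show ?thesis by (simp add: atMost_atLeast0)
  qed
  finally show ?thesis by simp
qed

lemma a_bound:
  fixes a :: "nat \<Rightarrow> real"
  assumes p: "0 < p" "p < 1" and nn: "\<And>n. a n \<ge> 0"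
    and B: "\<And>m. binom_trans p a m \<le> B"
  shows "a i \<le> (3 * B / (1 - exp (-(p^3)))) * (real i + 1)"
proof -
  define c where "c = 1 - exp (-(p^3))"
  have c: "c > 0" using p by (simp add: c_def)
  define \<mu> where "\<mu> = real (Suc i) * (1-p)/p"
  have mu0: "\<mu> \<ge> 0" using p by (simp add: \<mu>_def)
  define D where "D = nat \<lceil>\<mu> + real (Suc i)\<rceil>"
  define N where "N = i + D"
  have Dge: "real D \<ge> \<mu> + real (Suc i)" unfolding D_def using mu0 by linarith
  have Dle: "real D \<le> \<mu> + real (Suc i) + 1" unfolding D_def using mu0 by linarith
  have tail: "measure_pmf.prob (neg_binomial_pmf (Suc i) p) {x. \<mu> + real (Suc i) \<le> real x} \<le> exp (-(p^3))"
  proof -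
    have "measure_pmf.prob (neg_binomial_pmf (Suc i) p) {x. \<mu> + real (Suc i) \<le> real x}
       \<le> exp (- 2 * p ^ 3 * (real (Suc i))\<^sup>2 / (real (Suc i) + p * real (Suc i)))"
      using prob_neg_binomial_pmf_ge_bound[of p "real (Suc i)" "Suc i"] p unfolding \<mu>_def by simp
    also have "\<dots> \<le> exp (-(p^3))"
    proof -
      have x: "real (Suc i) + p * real (Suc i) = real (Suc i) * (1 + p)" by (simp add: algebra_simps)
      have "(real (Suc i))\<^sup>2 = real (Suc i) * real (Suc i)" by (simp add: power2_eq_square)
      then have e: "(real (Suc i))\<^sup>2 / (real (Suc i) + p * real (Suc i)) = real (Suc i) / (1 + p)"
        unfolding x by (metis mult_divide_mult_cancel_left of_nat_Suc of_nat_neq_0 add_nonneg_eq_0_iff)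
      have h12: "real (Suc i) / (1 + p) \<ge> 1/2" using p by (simp add: field_simps)
      have "2*p^3*(1/2) \<le> 2*p^3*(real (Suc i)/(1+p))"
        by (rule mult_left_mono) (use h12 p in auto)
      then have h3: "p^3 \<le> 2*p^3*(real (Suc i)/(1+p))" by simp
      have "-2 * p^3 * (real (Suc i))^2 / (real (Suc i) + p*real (Suc i))
          = -(2*p^3*((real (Suc i))^2 / (real (Suc i) + p*real (Suc i))))" by simp
      also have "\<dots> = -(2*p^3*(real (Suc i)/(1+p)))" unfolding e ..
      finally have "-2 * p^3 * (real (Suc i))^2 / (real (Suc i) + p*real (Suc i)) \<le> -(p^3)"
        using h3 by linarith
      then show ?thesis by simp
    qed
    finally show ?thesis .
  qed
  have sub: "UNIV - {..D} \<subseteq> {x. \<mu> + real (Suc i) \<le> real x}" using Dge by auto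
  have "measure_pmf.prob (neg_binomial_pmf (Suc i) p) (UNIV - {..D}) \<le> exp (-(p^3))"
  proof -
    have "measure_pmf.prob (neg_binomial_pmf (Suc i) p) (UNIV - {..D}) \<le> measure_pmf.prob (neg_binomial_pmf (Suc i) p) {x. \<mu> + real (Suc i) \<le> real x}"
      by (rule measure_pmf.finite_measure_mono[OF sub]) simp
    then show ?thesis using tail by linarith
  qed
  moreover have "measure_pmf.prob (neg_binomial_pmf (Suc i) p) (UNIV - {..D}) = 1 - measure_pmf.prob (neg_binomial_pmf (Suc i) p) {..D}"
    using measure_pmf.prob_compl[of "{..D}" "neg_binomial_pmf (Suc i) p"] by simp
  ultimately have pD: "measure_pmf.prob (neg_binomial_pmf (Suc i) p) {..D} \<ge> c"
    unfolding c_def by linarith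
  have w: "p * wnp N i p \<ge> c"
    using wnp_neg[of p i N] p pD unfolding N_def by simp
  have "a i * wnp N i p = (\<Sum>j=i..N. real (j choose i) * p ^ i * (1 - p) ^ (j - i) * a i)"
    unfolding wnp_def by (subst mult.commute) (rule sum_distrib_right)
  also have "\<dots> \<le> (\<Sum>j=i..N. binom_trans p a j)"
  proof (rule sum_mono)
    fix j assume j: "j \<in> {i..N}"
    show "real (j choose i) * p ^ i * (1 - p) ^ (j - i) * a i \<le> binom_trans p a j"
      unfolding binom_trans_def
      by (rule member_le_sum[where f = "\<lambda>i. real (j choose i) * p ^ i * (1 - p) ^ (j - i) * a i"])
         (use j p nn in auto)
  qed
  also have "\<dots> \<le> (\<Sum>j=i..N. B)" by (rule sum_mono) (rule B)
  also have "\<dots> = real (D+1) * B" by (simp add: N_def)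
  finally have 1: "a i * wnp N i p \<le> real (D+1) * B" .
  have B0: "B \<ge> 0"
  proof -
    have "binom_trans p a 0 = a 0" by (simp add: binom_trans_def)
    then show ?thesis using B[of 0] nn[of 0] by simp
  qed
  have "real (D+1) \<le> \<mu> + real (Suc i) + 2" using Dle by simp
  also have "\<dots> = real (Suc i) / p + 2" using p by (simp add: \<mu>_def field_simps)
  also have "\<dots> \<le> 3 * real (Suc i) / p"
  proof -
    have "2 * p \<le> 2 * real (Suc i)" using p by simp
    then have "2 \<le> 2 * real (Suc i) / p" using p by (simp add: pos_le_divide_eq mult.commute)
    moreover have "3 * real (Suc i) / p = real (Suc i) / p + 2 * real (Suc i) / p"
      by (simp add: add_divide_distrib[symmetric])
    ultimately show ?thesis by linarith
  qed
  finally have D1: "real (D+1) \<le> 3 * real (Suc i) / p" .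
  have "a i * c \<le> a i * (p * wnp N i p)" using w nn[of i] by (simp add: mult_left_mono)
  also have "\<dots> = p * (a i * wnp N i p)" by simp
  also have "\<dots> \<le> p * (real (D+1) * B)" using 1 p by (simp add: mult_left_mono)
  also have "\<dots> \<le> p * (3 * real (Suc i) / p * B)"
    using D1 B0 p by (intro mult_left_mono mult_right_mono) auto
  also have "\<dots> = 3 * B * (real i + 1)" using p by (simp add: field_simps)
  finally have "a i * c \<le> 3 * B * (real i + 1)" .
  then have "a i \<le> 3 * B * (real i + 1) / c" using c by (simp add: pos_le_divide_eq)
  then show ?thesis unfolding c_def by simp
qed

lemma swap_tri:
  fixes f :: "nat \<Rightarrow> nat \<Rightarrow> real"
  shows "(\<Sum>i=k..n. \<Sum>j=i..n. f i j) = (\<Sum>j=k..n. \<Sum>i=k..j. f i j)"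
proof -
  have "(\<Sum>i=k..n. \<Sum>j=i..n. f i j) = (\<Sum>i\<in>{k..n}. \<Sum>j\<in>{j\<in>{k..n}. i \<le> j}. f i j)"
    by (intro sum.cong refl) (auto intro: arg_cong[where f="\<lambda>A. sum _ A"])
  also have "\<dots> = (\<Sum>j\<in>{k..n}. \<Sum>i\<in>{i\<in>{k..n}. i \<le> j}. f i j)"
    by (rule sum.swap_restrict) auto
  also have "\<dots> = (\<Sum>j=k..n. \<Sum>i=k..j. f i j)"
    by (intro sum.cong refl) (auto intro: arg_cong[where f="\<lambda>A. sum _ A"])
  finally show ?thesis .
qed

lemma lim_aux: "((\<lambda>x::real. (x+1)*exp(-2*(sqrt x * ln x - 1)^2/x)) \<longlongrightarrow> 0) at_top"
  by real_asymp

theorem lemma9: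
  fixes p :: real and a :: "nat \<Rightarrow> real" and L :: real
  assumes "0 < p" "p < 1"
    and "\<And>n. a n \<ge> 0"
    and "binom_trans p a \<longlonglongrightarrow> L"
  shows "(\<lambda>n. az p a n / real (n + 1)) \<longlonglongrightarrow> 0"
proof -
  note p = assms(1,2) and nn = assms(3)
  have "Bseq (binom_trans p a)" using assms(4) by (intro convergent_imp_Bseq convergentI)
  then obtain B where B0: "B > 0" and Bb: "\<And>n. norm (binom_trans p a n) \<le> B"
    by (auto elim: BseqE)
  have Bm: "\<And>m. binom_trans p a m \<le> B" using Bb by (auto simp: abs_le_iff)
  define K where "K = 3 * B / (1 - exp (-(p^3)))"
  have K0: "K \<ge> 0" using B0 p by (simp add: K_def)
  have abnd: "\<And>i. a i \<le> K * (real i + 1)"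
    unfolding K_def by (rule a_bound[OF p nn Bm])
  define g where "g = (\<lambda>x::real. (x+1)*exp(-2*(sqrt x * ln x - 1)^2/x))"
  have bnd: "az p a n / real (n + 1) \<le> K * g (real n)" if n3: "n \<ge> 3" for n
  proof -
    define t where "t = sqrt (real n) * ln (real n) - 1"
    have epsn: "eps n = t + 1" using n3 by (simp add: eps_def t_def)
    have ln1: "ln (real n) \<ge> 1"
    proof -
      have "exp 1 \<le> real n" using exp_le n3 by linarith
      then show ?thesis using ln_le_cancel_iff[of "exp 1" "real n"] n3 by simp
    qed
    have sq1: "sqrt (real n) \<ge> 1" using n3 by simp
    have "1 * 1 \<le> sqrt (real n) * ln (real n)" by (rule mult_mono[OF sq1 ln1]) auto
    then have t0: "t \<ge> 0" unfolding t_def by simp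
    define k where "k = nat \<lfloor>p * real n + eps n\<rfloor>"
    have nn0: "p * real n + eps n \<ge> 0" using t0 p epsn by simp
    have fl: "real k = real_of_int \<lfloor>p * real n + eps n\<rfloor>" unfolding k_def using nn0 by simp
    have kge: "real k \<ge> p * real n + t"
      using fl floor_correct[of "p * real n + eps n"] epsn by linarith
    have "p * real n > 0" using p n3 by simp
    then have "real k > 0" using kge t0 by linarith
    then have k1: "k \<ge> 1" by simp
    define b where "b = (\<lambda>j i. real (j choose i) * p ^ i * (1 - p) ^ (j - i))"
    have b0: "\<And>j i. b j i \<ge> 0" using p by (simp add: b_def)
    have tailj: "(\<Sum>i=k..j. b j i) \<le> exp (-2 * t^2 / real n)" if j: "k \<le> j" "j \<le> n" for j
    proof -
      have jp: "j > 0" using j k1 by simp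
      have "(\<Sum>i=k..j. b j i) = (\<Sum>i\<in>{k..j}. pmf (binomial_pmf j p) i)"
        using p by (intro sum.cong refl) (simp add: b_def)
      also have "\<dots> = measure_pmf.prob (binomial_pmf j p) {k..j}"
        by (rule measure_measure_pmf_finite[symmetric]) simp
      also have "\<dots> \<le> measure_pmf.prob (binomial_pmf j p) {x. real j * p + t \<le> real x}"
      proof (rule measure_pmf.finite_measure_mono)
        show "{k..j} \<subseteq> {x. real j * p + t \<le> real x}"
        proof
          fix x assume "x \<in> {k..j}"
          then have "real x \<ge> real k" by simp
          moreover have "real j * p \<le> p * real n" using j p by (simp add: mult.commute mult_left_mono)
          ultimately show "x \<in> {x. real j * p + t \<le> real x}" using kge by simp
        qed
      qed simp
      also have "\<dots> \<le> exp (-2 * t^2 / real j)"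
        by (rule binomial_distribution.prob_ge) (use p jp t0 in \<open>auto simp: binomial_distribution_def\<close>)
      also have "\<dots> \<le> exp (-2 * t^2 / real n)"
      proof -
        have "t^2 / real n \<le> t^2 / real j"
          using jp j by (intro divide_left_mono) auto
        then show ?thesis by simp
      qed
      finally show ?thesis .
    qed
    have "az p a n = (\<Sum>i=k..n. \<Sum>j=i..n. b j i * a i)"
      unfolding az_def k_def[symmetric] wnp_def b_def by (simp add: sum_distrib_right)
    also have "\<dots> \<le> (\<Sum>i=k..n. \<Sum>j=i..n. b j i * (K * (real n + 1)))"
    proof (intro sum_mono)
      fix i j assume i: "i \<in> {k..n}" and "j \<in> {i..n}"
      have "K * (real i + 1) \<le> K * (real n + 1)" using i K0 by (intro mult_left_mono) auto
      then have "a i \<le> K * (real n + 1)" using abnd[of i] by linarith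
      then show "b j i * a i \<le> b j i * (K * (real n + 1))" using b0 by (simp add: mult_left_mono)
    qed
    also have "\<dots> = (\<Sum>j=k..n. \<Sum>i=k..j. b j i * (K * (real n + 1)))"
      by (rule swap_tri)
    also have "\<dots> = K * (real n + 1) * (\<Sum>j=k..n. \<Sum>i=k..j. b j i)"
      by (simp add: sum_distrib_left sum_distrib_right mult.commute)
    also have "\<dots> \<le> K * (real n + 1) * (\<Sum>j=k..n. exp (-2 * t^2 / real n))"
      using K0 tailj by (intro mult_left_mono sum_mono) auto
    also have "\<dots> \<le> K * (real n + 1) * ((real n + 1) * exp (-2 * t^2 / real n))"
    proof -
      have "(\<Sum>j=k..n. exp (-2 * t^2 / real n)) = real (card {k..n}) * exp (-2 * t^2 / real n)" by simp
      also have "\<dots> \<le> (real n + 1) * exp (-2 * t^2 / real n)"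
        by (intro mult_right_mono) auto
      finally show ?thesis using K0 by (intro mult_left_mono) auto
    qed
    finally have "az p a n \<le> K * (real n + 1) * ((real n + 1) * exp (-2 * t^2 / real n))" .
    then have "az p a n / real (n + 1) \<le> K * ((real n + 1) * exp (-2 * t^2 / real n))"
    proof -
      have X: "real (n + 1) > 0" by simp
      have "K * (real n + 1) * ((real n + 1) * exp (-2 * t^2 / real n))
          = (K * ((real n + 1) * exp (-2 * t^2 / real n))) * real (n + 1)" by (simp add: mult_ac)
      moreover have "real (n + 1) = real n + 1" by simp
      ultimately have h: "az p a n \<le> (K * ((real n + 1) * exp (-2 * t^2 / real n))) * real (n + 1)"
        using \<open>az p a n \<le> _\<close> by metis
      show ?thesis by (subst pos_divide_le_eq[OF X]) (rule h)
    qed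
    then show ?thesis by (simp add: g_def t_def)
  qed
  have az0: "az p a n / real (n + 1) \<ge> 0" for n
  proof -
    have "az p a n \<ge> 0" unfolding az_def wnp_def
      using p nn by (intro sum_nonneg mult_nonneg_nonneg) auto
    then show ?thesis by simp
  qed
  have glim: "(\<lambda>n. K * g (real n)) \<longlonglongrightarrow> 0"
  proof -
    have "(\<lambda>n. g (real n)) \<longlonglongrightarrow> 0"
      using filterlim_compose[OF lim_aux[folded g_def] filterlim_real_sequentially] by simp
    then show ?thesis using tendsto_mult_right_zero by blast
  qed
  show ?thesis
  proof (rule tendsto_sandwich[OF _ _ tendsto_const glim])
    show "\<forall>\<^sub>F n in sequentially. 0 \<le> az p a n / real (n + 1)" using az0 by simp
    show "\<forall>\<^sub>F n in sequentially. az p a n / real (n + 1) \<le> K * g (real n)"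
      using bnd eventually_sequentially by blast
  qed
qed

end
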